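(* Let $n=p^{\alpha}q^{\beta}$ where $p,q$ are distinct primes and $\alpha,\beta\geq 1$ are integers. Then $\mathbb{AG}(\mathbb{Z}_n)$ has no induced cycle of odd length greater than $3$.
   Context: For a commutative ring $R$ with unity, the annihilating-ideal graph $\mathbb{AG}(R)$ is the simple graph whose vertex set is the set of all non-zero ideals of $R$ with non-zero annihilator, two distinct vertices $I,J$ being adjacent if and only if $IJ=0$. An induced cycle is an induced subgraph isomorphic to a cycle. *)

theory Defs
  imports "HOL-Number_Theory.Residues" "HOL-Algebra.Ideal_Product"
begin

definition ann :: "('a, 'b) ring_scheme \<Rightarrow> 'a set \<Rightarrow> 'a set" where
  "ann R I = {x \<in> carrier R. \<forall>i\<in>I. x \<otimes>\<^bsub>R\<^esub> i = \<zero>\<^bsub>R\<^esub>}"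

definition AG_vertices :: "('a, 'b) ring_scheme \<Rightarrow> 'a set set" where
  "AG_vertices R = {I. ideal I R \<and> I \<noteq> {\<zero>\<^bsub>R\<^esub>} \<and> ann R I \<noteq> {\<zero>\<^bsub>R\<^esub>}}"

definition AG_adj :: "('a, 'b) ring_scheme \<Rightarrow> 'a set \<Rightarrow> 'a set \<Rightarrow> bool" where
  "AG_adj R I J \<longleftrightarrow> I \<in> AG_vertices R \<and> J \<in> AG_vertices R \<and> I \<noteq> J
                     \<and> ideal_prod R I J = {\<zero>\<^bsub>R\<^esub>}"

definition induced_cycle :: "'v set \<Rightarrow> ('v \<Rightarrow> 'v \<Rightarrow> bool) \<Rightarrow> nat \<Rightarrow> (nat \<Rightarrow> 'v) \<Rightarrow> bool" where
  "induced_cycle V E k v \<longleftrightarrow> 3 \<le> k \<and> (\<forall>i<k. v i \<in> V) \<and> inj_on v {..<k} \<and>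
     (\<forall>i<k. \<forall>j<k. i \<noteq> j \<longrightarrow> (E (v i) (v j) \<longleftrightarrow> (j = Suc i mod k \<or> i = Suc j mod k)))"

end

theory Submission
  imports Defs
begin

definition va :: "int \<Rightarrow> nat \<Rightarrow> int set \<Rightarrow> nat" where
  "va p a X = (GREATEST e. e \<le> a \<and> (\<forall>x\<in>X. p ^ e dvd x))"

lemma va_props:
  shows "va p a X \<le> a" and "\<forall>x\<in>X. p ^ va p a X dvd x"
    and "va p a X < a \<Longrightarrow> \<exists>x\<in>X. \<not> p ^ (va p a X + 1) dvd x"
proof -
  let ?P = "\<lambda>e. e \<le> a \<and> (\<forall>x\<in>X. p ^ e dvd x)"
  have P0: "?P 0" by simp
  have bnd: "\<forall>y. ?P y \<longrightarrow> y \<le> a" by simp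
  have "?P (va p a X)" unfolding va_def by (rule GreatestI_nat[where P="?P" and b=a, OF P0]) simp
  then show "va p a X \<le> a" and "\<forall>x\<in>X. p ^ va p a X dvd x" by auto
  assume lt: "va p a X < a"
  have "\<not> ?P (va p a X + 1)"
  proof
    assume "?P (va p a X + 1)"
    then have "va p a X + 1 \<le> va p a X" unfolding va_def
      by (rule Greatest_le_nat[where b=a]) auto
    then show False by simp
  qed
  then show "\<exists>x\<in>X. \<not> p ^ (va p a X + 1) dvd x" using lt by auto
qed

lemma exact_dvd_prod:
  fixes p x y :: int
  assumes "prime p" "p ^ a dvd x" "\<not> p ^ (a+1) dvd x" "p ^ b dvd y" "\<not> p ^ (b+1) dvd y"
  shows "\<not> p ^ (a+b+1) dvd x * y"
proof
  assume h: "p ^ (a+b+1) dvd x * y"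
  obtain x1 where x1: "x = p ^ a * x1" using assms(2) by blast
  obtain y1 where y1: "y = p ^ b * y1" using assms(4) by blast
  have nx: "\<not> p dvd x1" using assms(3) x1 by auto
  have ny: "\<not> p dvd y1" using assms(5) y1 by auto
  have "x * y = p ^ (a+b) * (x1 * y1)" using x1 y1 by (simp add: power_add algebra_simps)
  with h have "p ^ (a+b) * p dvd p ^ (a+b) * (x1 * y1)" by simp
  moreover have "p ^ (a+b) \<noteq> 0" using assms(1) by auto
  ultimately have "p dvd x1 * y1" by (metis dvd_mult_cancel_left mult_cancel_left)
  then show False using nx ny assms(1) by (simp add: prime_dvd_mult_iff)
qed

lemma key:
  fixes p q n :: int and X Y :: "int set"
  assumes "prime p" "prime q" "p \<noteq> q" "n = p ^ a * q ^ b"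
  shows "(\<forall>x\<in>X. \<forall>y\<in>Y. (x * y) mod n = 0) \<longleftrightarrow>
         (va p a X + va p a Y \<ge> a \<and> va q b X + va q b Y \<ge> b)"
proof
  assume L: "\<forall>x\<in>X. \<forall>y\<in>Y. (x * y) mod n = 0"
  have gen: "va r c X + va r c Y \<ge> c" if r: "prime r" "r ^ c dvd n" for r c
  proof (rule ccontr)
    assume "\<not> c \<le> va r c X + va r c Y"
    then have lt: "va r c X + va r c Y < c" by simp
    then obtain x where x: "x \<in> X" "\<not> r ^ (va r c X + 1) dvd x"
      using va_props(3)[where p=r and a=c and X=X] by auto
    obtain y where y: "y \<in> Y" "\<not> r ^ (va r c Y + 1) dvd y"
      using va_props(3)[where p=r and a=c and X=Y] lt by auto
    have "\<not> r ^ (va r c X + va r c Y + 1) dvd x * y"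
      by (rule exact_dvd_prod[OF r(1)]) (use x y va_props(2) in auto)
    moreover have "r ^ (va r c X + va r c Y + 1) dvd r ^ c"
      using lt by (intro le_imp_power_dvd) simp
    ultimately have "\<not> n dvd x * y" using r(2) dvd_trans by blast
    then show False using L x y by auto
  qed
  show "va p a X + va p a Y \<ge> a \<and> va q b X + va q b Y \<ge> b"
    using gen[OF assms(1)] gen[OF assms(2)] assms(4) by auto
next
  assume R: "va p a X + va p a Y \<ge> a \<and> va q b X + va q b Y \<ge> b"
  have cop: "coprime (p ^ a) (q ^ b)"
    using assms(1-3) by (simp add: primes_coprime)
  show "\<forall>x\<in>X. \<forall>y\<in>Y. (x * y) mod n = 0"
  proof (intro ballI)
    fix x y assume x: "x \<in> X" and y: "y \<in> Y"
    have "p ^ (va p a X + va p a Y) dvd x * y"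
      using va_props(2)[where p=p and a=a and X=X] va_props(2)[where p=p and a=a and X=Y] x y
      by (simp add: power_add mult_dvd_mono)
    then have dp: "p ^ a dvd x * y" using R le_imp_power_dvd dvd_trans by blast
    have "q ^ (va q b X + va q b Y) dvd x * y"
      using va_props(2)[where p=q and a=b and X=X] va_props(2)[where p=q and a=b and X=Y] x y
      by (simp add: power_add mult_dvd_mono)
    then have dq: "q ^ b dvd x * y" using R le_imp_power_dvd dvd_trans by blast
    have "n dvd x * y" using divides_mult[OF dp dq cop] assms(4) by simp
    then show "(x * y) mod n = 0" by simp
  qed
qed

lemma comb:
  fixes A B :: "nat \<Rightarrow> nat" and k a b :: nat
  assumes "odd k" "5 \<le> k"
    and adj: "\<And>i j. i < k \<Longrightarrow> j < k \<Longrightarrow> i \<noteq> j \<Longrightarrow>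
       (a \<le> A i + A j \<and> b \<le> B i + B j) \<longleftrightarrow> (j = Suc i mod k \<or> i = Suc j mod k)"
  shows False
proof -
  define nx where "nx i = (if Suc i = k then 0 else Suc i)" for i
  define pv where "pv i = (if i = 0 then k - 1 else i - 1)" for i
  define E where "E i j = (a \<le> A i + A j \<and> b \<le> B i + B j)" for i j
  have smod: "Suc i mod k = nx i" if "i < k" for i
    using that unfolding nx_def by (auto simp: mod_if)
  have adj': "E i j \<longleftrightarrow> (j = nx i \<or> i = nx j)" if "i < k" "j < k" "i \<noteq> j" for i j
    using adj[OF that] smod that unfolding E_def by simp
  have nxk: "nx i < k" if "i < k" for i using that assms(2) unfolding nx_def by auto
  have pvk: "pv i < k" if "i < k" for i using that assms(2) unfolding pv_def by auto
  have pvnx: "pv (nx i) = i" if "i < k" for i using that assms(2) unfolding nx_def pv_def by (auto split: if_splits)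
  have loc: "(A (nx i) > A i \<and> A (pv i) > A i \<and> B (nx i) \<le> B i \<and> B (pv i) \<le> B i) \<or>
             (B (nx i) > B i \<and> B (pv i) > B i \<and> A (nx i) \<le> A i \<and> A (pv i) \<le> A i)"
    if i: "i < k" for i
  proof -
    let ?x = "nx i" and ?x' = "nx (nx i)" and ?y = "pv i" and ?y' = "pv (pv i)"
    have k: "?x < k" "?x' < k" "?y < k" "?y' < k" using i nxk pvk by auto
    have "E i ?x" using adj'[of i ?x] i k assms(2) unfolding nx_def by auto
    moreover have "E i ?y" using adj'[of i ?y] i k assms(2) unfolding nx_def pv_def by (auto split: if_splits)
    moreover have "E ?x ?x'" using adj'[of ?x ?x'] i k assms(2) unfolding nx_def by auto
    moreover have "E ?y ?y'" using adj'[of ?y ?y'] i k assms(2) unfolding nx_def pv_def by (auto split: if_splits)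
    moreover have "\<not> E i ?x'" using adj'[of i ?x'] i k assms(2) unfolding nx_def by auto
    moreover have "\<not> E i ?y'" using adj'[of i ?y'] i k assms(2) unfolding nx_def pv_def by (auto split: if_splits)
    moreover have "\<not> E ?x ?y" using adj'[of ?x ?y] i k assms(2) unfolding nx_def pv_def by (auto split: if_splits)
    ultimately show ?thesis unfolding E_def by linarith
  qed
  define T where "T i = (A i < A (nx i))" for i
  have alt: "T (nx i) \<longleftrightarrow> \<not> T i" if "i < k" for i
    using loc[OF that] loc[OF nxk[OF that]] pvnx[OF that] unfolding T_def by auto
  have par: "i < k \<Longrightarrow> (T i \<longleftrightarrow> (T 0 \<longleftrightarrow> even i))" for i
  proof (induction i)
    case 0 then show ?case by simp
  next
    case (Suc i)
    then have "nx i = Suc i" unfolding nx_def by auto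
    with alt[of i] Suc show ?case by auto
  qed
  have "k - 1 < k" "nx (k - 1) = 0" "even (k - 1)" using assms unfolding nx_def by auto
  with alt[of "k - 1"] par[of "k - 1"] show False by auto
qed

lemma prod_zero:
  assumes "0 \<in> I" "0 \<in> J"
  shows "ideal_prod (residue_ring m) I J = {\<zero>\<^bsub>residue_ring m\<^esub>} \<longleftrightarrow>
         (\<forall>x\<in>I. \<forall>y\<in>J. (x * y) mod m = 0)"
proof
  assume h: "ideal_prod (residue_ring m) I J = {\<zero>\<^bsub>residue_ring m\<^esub>}"
  show "\<forall>x\<in>I. \<forall>y\<in>J. (x * y) mod m = 0"
  proof (intro ballI)
    fix x y assume "x \<in> I" "y \<in> J"
    then have "x \<otimes>\<^bsub>residue_ring m\<^esub> y \<in> ideal_prod (residue_ring m) I J"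
      by (rule ideal_prod.prod)
    with h show "(x * y) mod m = 0" by (simp add: residue_ring_def)
  qed
next
  assume h: "\<forall>x\<in>I. \<forall>y\<in>J. (x * y) mod m = 0"
  have "s = 0" if "s \<in> ideal_prod (residue_ring m) I J" for s
    using that by (induct s rule: ideal_prod.induct) (use h in \<open>auto simp: residue_ring_def\<close>)
  moreover have "0 \<otimes>\<^bsub>residue_ring m\<^esub> 0 \<in> ideal_prod (residue_ring m) I J"
    using assms by (rule ideal_prod.prod)
  ultimately show "ideal_prod (residue_ring m) I J = {\<zero>\<^bsub>residue_ring m\<^esub>}"
    by (auto simp: residue_ring_def)
qed

theorem lemma6:
  fixes p q \<alpha> \<beta> n :: nat
  assumes "prime p" and "prime q" and "p \<noteq> q"
    and "\<alpha> \<ge> 1" and "\<beta> \<ge> 1"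
    and "n = p ^ \<alpha> * q ^ \<beta>"
  shows "\<not> (\<exists>k v. odd k \<and> k > 3 \<and>
            induced_cycle (AG_vertices (residue_ring (int n))) (AG_adj (residue_ring (int n))) k v)"
proof
  assume "\<exists>k v. odd k \<and> k > 3 \<and>
            induced_cycle (AG_vertices (residue_ring (int n))) (AG_adj (residue_ring (int n))) k v"
  then obtain k v where k: "odd k" "k > 3" and
    cyc: "induced_cycle (AG_vertices (residue_ring (int n))) (AG_adj (residue_ring (int n))) k v"
    by blast
  define R where "R = residue_ring (int n)"
  have k5: "5 \<le> k" using k by presburger
  have pi: "prime (int p)" "prime (int q)" "int p \<noteq> int q" using assms by auto
  have ni: "int n = int p ^ \<alpha> * int q ^ \<beta>" using assms(6) by simp
  have vert: "\<And>i. i < k \<Longrightarrow> v i \<in> AG_vertices R" and injv: "inj_on v {..<k}"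
    and cy: "\<And>i j. i < k \<Longrightarrow> j < k \<Longrightarrow> i \<noteq> j \<Longrightarrow>
       AG_adj R (v i) (v j) \<longleftrightarrow> (j = Suc i mod k \<or> i = Suc j mod k)"
    using cyc unfolding induced_cycle_def R_def by auto
  have z: "0 \<in> v i" if "i < k" for i
  proof -
    have "ideal (v i) R" using vert[OF that] unfolding AG_vertices_def by auto
    then have "\<zero>\<^bsub>R\<^esub> \<in> v i" by (meson additive_subgroup.zero_closed ideal.axioms(1))
    then show ?thesis by (simp add: R_def residue_ring_def)
  qed
  show False
  proof (rule comb[where k=k and A="\<lambda>i. va (int p) \<alpha> (v i)" and a=\<alpha> and B="\<lambda>i. va (int q) \<beta> (v i)" and b=\<beta>])
    show "odd k" "5 \<le> k" using k k5 by auto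
    fix i j assume ij: "i < k" "j < k" "i \<noteq> j"
    have ne: "v i \<noteq> v j" using injv ij unfolding inj_on_def by auto
    have "AG_adj R (v i) (v j) \<longleftrightarrow> ideal_prod R (v i) (v j) = {\<zero>\<^bsub>R\<^esub>}"
      using vert ij ne unfolding AG_adj_def by auto
    also have "\<dots> \<longleftrightarrow> (\<forall>x\<in>v i. \<forall>y\<in>v j. (x * y) mod int n = 0)"
      unfolding R_def by (rule prod_zero[OF z z]) (use ij in auto)
    also have "\<dots> \<longleftrightarrow> (\<alpha> \<le> va (int p) \<alpha> (v i) + va (int p) \<alpha> (v j) \<and>
                      \<beta> \<le> va (int q) \<beta> (v i) + va (int q) \<beta> (v j))"
      by (rule key[OF pi ni])
    finally show "(\<alpha> \<le> va (int p) \<alpha> (v i) + va (int p) \<alpha> (v j) \<and>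
                      \<beta> \<le> va (int q) \<beta> (v i) + va (int q) \<beta> (v j)) \<longleftrightarrow>
                  (j = Suc i mod k \<or> i = Suc j mod k)"
      using cy[OF ij] by simp
  qed
qed

end
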